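(* Consider two $M^{X}/G/1$ queues operating under the LCFS-p-repeat (with resampling) discipline, with the same Poisson batch-arrival rate $\lambda$ and the same batch-size distribution (mean $\mu$), and with generic i.i.d. service times $S$ and $S'$ respectively, both stable ($E(e^{-\lambda S})>\mu/(\mu+1)$ and $E(e^{-\lambda S'})>\mu/(\mu+1)$). Let $M$ and $M'$ be the maximum numbers of customers in the system during a busy period in the respective queues. If $E(e^{-\lambda S'})\geq E(e^{-\lambda S})$, then $M'\leq_{st}M$.
   Context: Under LCFS-p-repeat (with resampling), the customer who has been in the system the least amount of time is always served, newly arriving customers preempt the customer in service (customers within a batch are labeled arbitrarily and treated as arriving sequentially), service is non-idling, and a preempted service must be restarted from scratch when service recommences, with a new service time drawn independently from the service-time distribution. $X\geq_{st}Y$ iff $P(X>t)\geq P(Y>t)$ for all $t$. *)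

theory Defs
  imports "HOL-Probability.Probability"
begin

text \<open>Sample-path model of one busy period of an M^X/G/1 queue under LCFS-p-repeat
with resampling.  Inputs: s j = service requirement drawn at the j-th service start
(attempt-indexed, fresh independent draw at each (re)start), e k = k-th interarrival
time of batches, b k = size of the k-th batch (b 0 = batch that starts the busy period
at time 0).  State: (customers in system, residual time to next batch arrival,
index of next service draw, index of next batch).\<close>

fun lcfs_step :: "(nat \<Rightarrow> real) \<Rightarrow> (nat \<Rightarrow> real) \<Rightarrow> (nat \<Rightarrow> nat) \<Rightarrow>
    nat \<times> real \<times> nat \<times> nat \<Rightarrow> nat \<times> real \<times> nat \<times> nat" where
  "lcfs_step s e b (n, r, j, k) =
     (if n = 0 then (n, r, j, k)
      else if s j < r then (n - 1, r - s j, Suc j, k)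
      else (n + b k, e k, Suc j, Suc k))"

definition lcfs_path :: "(nat \<Rightarrow> real) \<Rightarrow> (nat \<Rightarrow> real) \<Rightarrow> (nat \<Rightarrow> nat) \<Rightarrow>
    nat \<Rightarrow> nat \<times> real \<times> nat \<times> nat" where
  "lcfs_path s e b i = (lcfs_step s e b ^^ i) (b 0, e 0, 0, 1)"

text \<open>Maximum number of customers in the system during the busy period
(the path is frozen once the system empties; value \<infinity> if it never empties).\<close>
definition lcfs_busy_max :: "(nat \<Rightarrow> real) \<Rightarrow> (nat \<Rightarrow> real) \<Rightarrow> (nat \<Rightarrow> nat) \<Rightarrow> enat" where
  "lcfs_busy_max s e b = (SUP i. enat (fst (lcfs_path s e b i)))"

definition lcfs_input :: "'w measure \<Rightarrow> real \<Rightarrow> (nat \<Rightarrow> 'w \<Rightarrow> real) \<Rightarrow>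
    (nat \<Rightarrow> 'w \<Rightarrow> real) \<Rightarrow> (nat \<Rightarrow> 'w \<Rightarrow> nat) \<Rightarrow> bool" where
  "lcfs_input P lam s e b \<longleftrightarrow>
     prob_space P \<and> 0 < lam \<and>
     prob_space.indep_vars P (\<lambda>_. borel)
       (\<lambda>i \<omega>. case i of Inl (Inl j) \<Rightarrow> s j \<omega> | Inl (Inr k) \<Rightarrow> e k \<omega> | Inr k \<Rightarrow> real (b k \<omega>))
       (UNIV :: ((nat + nat) + nat) set) \<and>
     (\<forall>j. distr P borel (s j) = distr P borel (s 0)) \<and>
     (\<forall>j. AE \<omega> in P. 0 \<le> s j \<omega>) \<and>
     (\<forall>k. distributed P lborel (e k) (exponential_density lam)) \<and>
     (\<forall>k. b k \<in> measurable P (count_space UNIV)) \<and>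
     (\<forall>k. distr P (count_space UNIV) (b k) = distr P (count_space UNIV) (b 0)) \<and>
     (\<forall>k. AE \<omega> in P. 1 \<le> b k \<omega>) \<and>
     integrable P (\<lambda>\<omega>. real (b 0 \<omega>))"

end

theory Submission
  imports Defs
begin


type_synonym idx = "(nat + nat) + nat"

definition shS :: "idx \<Rightarrow> idx" where
  "shS i = (case i of Inl (Inl j) \<Rightarrow> Inl (Inl (Suc j)) | _ \<Rightarrow> i)"
definition shE :: "idx \<Rightarrow> idx" where
  "shE i = (case i of Inl (Inr j) \<Rightarrow> Inl (Inr (Suc j)) | _ \<Rightarrow> i)"
definition shB :: "idx \<Rightarrow> idx" where
  "shB i = (case i of Inr j \<Rightarrow> Inr (Suc j) | _ \<Rightarrow> i)"

lemma sh_simps[simp]: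
  "shS (Inl (Inl j)) = Inl (Inl (Suc j))" "shS (Inl (Inr j)) = Inl (Inr j)" "shS (Inr j) = Inr j"
  "shE (Inl (Inl j)) = Inl (Inl j)" "shE (Inl (Inr j)) = Inl (Inr (Suc j))" "shE (Inr j) = Inr j"
  "shB (Inl (Inl j)) = Inl (Inl j)" "shB (Inl (Inr j)) = Inl (Inr j)" "shB (Inr j) = Inr (Suc j)"
  by (simp_all add: shS_def shE_def shB_def)

lemma sh_inj: "inj shS" "inj shE" "inj shB"
  unfolding inj_def shS_def shE_def shB_def by (auto split: sum.splits)

lemma sh_comm: "shS \<circ> shE = shE \<circ> shS" "shS \<circ> shB = shB \<circ> shS" "shE \<circ> shB = shB \<circ> shE"
  by (auto simp: fun_eq_iff shS_def shE_def shB_def split: sum.splits)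

fun hit :: "nat \<Rightarrow> nat \<Rightarrow> nat \<Rightarrow> real \<Rightarrow> (idx \<Rightarrow> real) \<Rightarrow> bool" where
  "hit m 0 n r z = (m < n)"
| "hit m (Suc N) n r z = (m < n \<or> (n \<noteq> 0 \<and>
     (if z (Inl (Inl 0)) < r then hit m N (n - 1) (r - z (Inl (Inl 0))) (z \<circ> shS)
      else (\<exists>\<beta>. z (Inr 0) = real \<beta> \<and> hit m N (n + \<beta>) (z (Inl (Inr 0))) (z \<circ> shS \<circ> shE \<circ> shB)))))"

lemma reidx_meas:
  assumes "\<And>i. \<sigma> i \<in> K"
  shows "(\<lambda>w. w \<circ> \<sigma>) \<in> measurable (PiM K (\<lambda>_. borel :: real measure)) (PiM UNIV (\<lambda>_::idx. borel :: real measure))"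
proof -
  have "(\<lambda>w i. w (\<sigma> i)) \<in> measurable (PiM K (\<lambda>_. borel :: real measure)) (PiM UNIV (\<lambda>_::idx. borel :: real measure))"
    by (rule measurable_PiM_single') (auto intro: measurable_component_singleton assms)
  then show ?thesis by (simp add: comp_def)
qed

lemma hit_meas:
  "Measurable.pred (borel \<Otimes>\<^sub>M PiM UNIV (\<lambda>_::idx. borel :: real measure)) (\<lambda>(r,z). hit m N n r z)"
proof (induction N arbitrary: n)
  case 0
  then show ?case by simp
next
  case (Suc N)
  have c: "\<And>i. (\<lambda>(r::real, z::idx\<Rightarrow>real). z i) \<in> borel_measurable (borel \<Otimes>\<^sub>M PiM UNIV (\<lambda>_::idx. borel :: real measure))"
    by measurable
  have sh: "\<And>\<sigma>. (\<lambda>x::real\<times>(idx\<Rightarrow>real). snd x \<circ> \<sigma>) \<in> measurable (borel \<Otimes>\<^sub>M PiM UNIV (\<lambda>_::idx. borel :: real measure)) (PiM UNIV (\<lambda>_::idx. borel :: real measure))"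
    using measurable_compose[OF measurable_snd reidx_meas[where K=UNIV]] by (simp add: split_beta')
  have p1: "Measurable.pred (borel \<Otimes>\<^sub>M PiM UNIV (\<lambda>_::idx. borel :: real measure))
      (\<lambda>x. hit m N n' (f x) (g x))" if "f \<in> borel_measurable (borel \<Otimes>\<^sub>M PiM UNIV (\<lambda>_::idx. borel :: real measure))"
      "g \<in> measurable (borel \<Otimes>\<^sub>M PiM UNIV (\<lambda>_::idx. borel :: real measure)) (PiM UNIV (\<lambda>_::idx. borel :: real measure))" for f g n'
    using measurable_compose[OF measurable_Pair[OF that] Suc.IH[of n']] by simp
  show ?case
    unfolding hit.simps split_beta'
    apply (intro pred_intros_logic pred_intros_countable measurable_If p1)
    using sh[of shS] sh[of "shS \<circ> shE \<circ> shB"]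
    apply (auto intro!: p1 c borel_measurable_diff simp: split_beta' comp_assoc)
    done
qed

definition zz :: "(nat \<Rightarrow> real) \<Rightarrow> (nat \<Rightarrow> real) \<Rightarrow> (nat \<Rightarrow> nat) \<Rightarrow> nat \<Rightarrow> nat \<Rightarrow> idx \<Rightarrow> real" where
  "zz s e b j k = (\<lambda>i. case i of Inl (Inl x) \<Rightarrow> s (x + j) | Inl (Inr x) \<Rightarrow> e (x + k) | Inr x \<Rightarrow> real (b (x + k)))"

lemma zz_shS: "zz s e b j k \<circ> shS = zz s e b (Suc j) k"
  by (auto simp: fun_eq_iff zz_def shS_def split: sum.splits)
lemma zz_shEB: "zz s e b j k \<circ> shE \<circ> shB = zz s e b j (Suc k)"
  by (auto simp: fun_eq_iff zz_def shS_def shE_def shB_def split: sum.splits)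

lemma step_fix: "(lcfs_step s e b ^^ i) (0, r, j, k) = (0, r, j, k)"
  by (induction i) auto

lemma conn:
  "(\<exists>i\<le>N. m < fst ((lcfs_step s e b ^^ i) (n, r, j, k))) = hit m N n r (zz s e b j k)"
proof (induction N arbitrary: n r j k)
  case 0
  then show ?case by simp
next
  case (Suc N)
  have ex: "(\<exists>i\<le>Suc N. P i) = (P 0 \<or> (\<exists>i\<le>N. P (Suc i)))" for P
    by (metis Suc_le_mono not0_implies_Suc zero_le)
  have fs: "(lcfs_step s e b ^^ Suc i) x = (lcfs_step s e b ^^ i) (lcfs_step s e b x)" for i x
    by (simp only: funpow_Suc_right comp_def)
  show ?case
  proof (cases "n = 0")
    case True
    then show ?thesis by (simp add: step_fix)
  next
    case False
    then show ?thesis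
      unfolding ex fs using Suc.IH
      by (auto simp: zz_shS zz_shEB, auto simp: zz_def)
  qed
qed



fun H :: "real \<Rightarrow> (nat \<Rightarrow> real) \<Rightarrow> nat \<Rightarrow> nat \<Rightarrow> nat \<Rightarrow> real" where
  "H p pB m 0 n = (if m < n then 1 else 0)"
| "H p pB m (Suc N) n = (if m < n then 1 else if n = 0 then 0
     else p * H p pB m N (n - 1) + (1 - p) * (\<Sum>\<beta>. pB \<beta> * H p pB m N (n + \<beta>)))"

locale hpar =
  fixes pB :: "nat \<Rightarrow> real"
  assumes pB_nn: "\<And>\<beta>. 0 \<le> pB \<beta>" and pB_sums: "pB sums 1"
begin

lemma summ: assumes "\<And>\<beta>. 0 \<le> f \<beta> \<and> f \<beta> \<le> 1" shows "summable (\<lambda>\<beta>. pB \<beta> * f \<beta>)"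
proof (rule summable_comparison_test'[where g=pB])
  show "summable pB" using pB_sums by (simp add: sums_summable)
  show "norm (pB \<beta> * f \<beta>) \<le> pB \<beta>" for \<beta>
    using assms[of \<beta>] pB_nn[of \<beta>] by (simp add: abs_mult mult_left_le)
qed

lemma suminf_bounds: assumes "\<And>\<beta>. 0 \<le> f \<beta> \<and> f \<beta> \<le> 1"
  shows "0 \<le> (\<Sum>\<beta>. pB \<beta> * f \<beta>) \<and> (\<Sum>\<beta>. pB \<beta> * f \<beta>) \<le> 1"
proof
  show "0 \<le> (\<Sum>\<beta>. pB \<beta> * f \<beta>)"
    using summ[OF assms] assms pB_nn by (intro suminf_nonneg) auto
  have "(\<Sum>\<beta>. pB \<beta> * f \<beta>) \<le> (\<Sum>\<beta>. pB \<beta>)"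
    using summ[OF assms] assms pB_nn pB_sums
    by (intro suminf_le) (auto simp: sums_summable mult_left_le)
  then show "(\<Sum>\<beta>. pB \<beta> * f \<beta>) \<le> 1" using pB_sums sums_unique by fastforce
qed

lemma H_bounds: assumes "0 \<le> p" "p \<le> 1" shows "0 \<le> H p pB m N n \<and> H p pB m N n \<le> 1"
proof (induction N arbitrary: n)
  case 0 then show ?case by simp
next
  case (Suc N)
  have s: "0 \<le> (\<Sum>\<beta>. pB \<beta> * H p pB m N (n + \<beta>)) \<and> (\<Sum>\<beta>. pB \<beta> * H p pB m N (n + \<beta>)) \<le> 1"
    by (rule suminf_bounds) (use Suc.IH in auto)
  have a: "0 \<le> H p pB m N (n-1) \<and> H p pB m N (n-1) \<le> 1" using Suc.IH by auto
  have "p * H p pB m N (n - 1) + (1 - p) * (\<Sum>\<beta>. pB \<beta> * H p pB m N (n + \<beta>)) \<le> p * 1 + (1 - p) * 1"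
    using s a assms by (intro add_mono mult_left_mono) auto
  moreover have "0 \<le> p * H p pB m N (n - 1) + (1 - p) * (\<Sum>\<beta>. pB \<beta> * H p pB m N (n + \<beta>))"
    using s a assms by simp
  ultimately show ?case by simp
qed

lemma H_mono: assumes "0 \<le> p" "p \<le> 1" shows "n \<le> n' \<Longrightarrow> H p pB m N n \<le> H p pB m N n'"
proof (induction N arbitrary: n n')
  case 0 then show ?case by simp
next
  case (Suc N)
  note b = H_bounds[OF assms]
  have s: "(\<Sum>\<beta>. pB \<beta> * H p pB m N (n + \<beta>)) \<le> (\<Sum>\<beta>. pB \<beta> * H p pB m N (n' + \<beta>))"
    using Suc pB_nn by (intro suminf_le summ b) (auto intro!: mult_left_mono)
  have a: "H p pB m N (n-1) \<le> H p pB m N (n'-1)" using Suc by auto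
  have "p * H p pB m N (n - 1) + (1 - p) * (\<Sum>\<beta>. pB \<beta> * H p pB m N (n + \<beta>)) \<le>
        p * H p pB m N (n' - 1) + (1 - p) * (\<Sum>\<beta>. pB \<beta> * H p pB m N (n' + \<beta>))"
    using s a assms by (intro add_mono mult_left_mono) auto
  moreover have "0 \<le> H p pB m (Suc N) n'" by (rule conjunct1[OF H_bounds[OF assms]])
  moreover have "H p pB m (Suc N) n \<le> 1" by (rule conjunct2[OF H_bounds[OF assms]])
  ultimately show ?case using Suc.prems
  proof -
    assume ineq: "p * H p pB m N (n - 1) + (1 - p) * (\<Sum>\<beta>. pB \<beta> * H p pB m N (n + \<beta>)) \<le>
        p * H p pB m N (n' - 1) + (1 - p) * (\<Sum>\<beta>. pB \<beta> * H p pB m N (n' + \<beta>))"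
      and h1: "0 \<le> H p pB m (Suc N) n'" and h2: "H p pB m (Suc N) n \<le> 1"
    show ?thesis
    proof (cases "m < n'")
      case True
      then have "H p pB m (Suc N) n' = 1" by simp
      with h2 show ?thesis by simp
    next
      case F1: False
      show ?thesis
      proof (cases "n = 0")
        case True
        then have "H p pB m (Suc N) n = 0" by simp
        with h1 show ?thesis by simp
      next
        case False
        with F1 Suc.prems show ?thesis using ineq by simp
      qed
    qed
  qed
qed

lemma H_anti: assumes "0 \<le> p" "p \<le> p'" "p' \<le> 1" shows "H p' pB m N n \<le> H p pB m N n"
proof (induction N arbitrary: n)
  case 0 then show ?case by simp
next
  case (Suc N)
  have b: "0 \<le> H p pB m N k \<and> H p pB m N k \<le> 1" for k using H_bounds assms by auto
  have b': "0 \<le> H p' pB m N k \<and> H p' pB m N k \<le> 1" for k using H_bounds assms by auto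
  define a where "a = H p pB m N (n - 1)"
  define a' where "a' = H p' pB m N (n - 1)"
  define c where "c = (\<Sum>\<beta>. pB \<beta> * H p pB m N (n + \<beta>))"
  define c' where "c' = (\<Sum>\<beta>. pB \<beta> * H p' pB m N (n + \<beta>))"
  have cc: "c' \<le> c" unfolding c_def c'_def
    using Suc pB_nn by (intro suminf_le summ b b') (auto intro!: mult_left_mono)
  have aa: "a' \<le> a" using Suc unfolding a_def a'_def by auto
  have "(\<Sum>\<beta>. pB \<beta> * a) \<le> c" unfolding c_def
    using pB_nn H_mono[of p "n-1" "n+_"] assms b
    by (intro suminf_le summ) (auto intro!: mult_left_mono simp: a_def)
  moreover have "(\<Sum>\<beta>. pB \<beta> * a) = a"
    using pB_sums sums_mult2[OF pB_sums, of a] sums_unique by fastforce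
  ultimately have ac: "a \<le> c" by simp
  have "p' * a' + (1 - p') * c' \<le> p' * a + (1 - p') * c"
    using aa cc assms by (intro add_mono mult_left_mono) auto
  also have "\<dots> \<le> p * a + (1 - p) * c"
  proof -
    have "(p' - p) * a \<le> (p' - p) * c" using ac assms by (intro mult_left_mono) auto
    then show ?thesis by (simp add: algebra_simps)
  qed
  finally show ?case by (simp add: a_def a'_def c_def c'_def)
qed

end


lemma (in prob_space) indep_sets_reindex:
  assumes ind: "indep_sets F I" and inj: "inj_on \<sigma> J" and sub: "\<sigma> ` J \<subseteq> I"
  shows "indep_sets (\<lambda>j. F (\<sigma> j)) J"
  unfolding indep_sets_def
proof (intro conjI ballI allI impI)
  fix j assume "j \<in> J"
  then show "F (\<sigma> j) \<subseteq> events" using ind sub by (auto simp: indep_sets_def)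
next
  fix K A assume K: "K \<subseteq> J" "K \<noteq> {}" "finite K" and A: "A \<in> Pi K (\<lambda>j. F (\<sigma> j))"
  have injK: "inj_on \<sigma> K" using inj K(1) by (rule inj_on_subset)
  define B where "B i = A (the_inv_into K \<sigma> i)" for i
  have BA: "B (\<sigma> j) = A j" if "j \<in> K" for j
    unfolding B_def using the_inv_into_f_f[OF injK that] by simp
  have "B \<in> Pi (\<sigma> ` K) F" using A BA by auto
  moreover have "\<sigma> ` K \<subseteq> I" "\<sigma> ` K \<noteq> {}" "finite (\<sigma> ` K)" using K sub by auto
  ultimately have "prob (\<Inter>i\<in>\<sigma> ` K. B i) = (\<Prod>i\<in>\<sigma> ` K. prob (B i))"
    using ind unfolding indep_sets_def by blast
  moreover have "(\<Inter>i\<in>\<sigma> ` K. B i) = (\<Inter>j\<in>K. A j)" using BA by auto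
  moreover have "(\<Prod>i\<in>\<sigma> ` K. prob (B i)) = (\<Prod>j\<in>K. prob (A j))"
    using BA by (simp add: prod.reindex[OF injK])
  ultimately show "prob (\<Inter>j\<in>K. A j) = (\<Prod>j\<in>K. prob (A j))" by simp
qed

lemma (in prob_space) indep_vars_reindex:
  assumes ind: "indep_vars M' X I" and inj: "inj_on \<sigma> J" and sub: "\<sigma> ` J \<subseteq> I"
  shows "indep_vars (\<lambda>j. M' (\<sigma> j)) (\<lambda>j. X (\<sigma> j)) J"
  using ind sub indep_sets_reindex[OF _ inj sub, of "\<lambda>i. {X i -` A \<inter> space M |A. A \<in> sets (M' i)}"]
  unfolding indep_vars_def2 by auto

lemma (in prob_space) cond:
  assumes ind: "indep_var MX X MY Y" and g[measurable]: "g \<in> borel_measurable (MX \<Otimes>\<^sub>M MY)"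
  shows "(\<integral>\<^sup>+\<omega>. g (X \<omega>, Y \<omega>) \<partial>M) = (\<integral>\<^sup>+y. (\<integral>\<^sup>+\<omega>. g (X \<omega>, y) \<partial>M) \<partial>distr M MY Y)"
proof -
  have rX[measurable]: "X \<in> measurable M MX" and rY[measurable]: "Y \<in> measurable M MY"
    using indep_var_rv1[OF ind] indep_var_rv2[OF ind] by auto
  interpret DX: prob_space "distr M MX X" by (rule prob_space_distr) simp
  interpret DY: prob_space "distr M MY Y" by (rule prob_space_distr) simp
  interpret D: pair_prob_space "distr M MX X" "distr M MY Y" ..
  have eq: "distr M MX X \<Otimes>\<^sub>M distr M MY Y = distr M (MX \<Otimes>\<^sub>M MY) (\<lambda>x. (X x, Y x))"
    using ind unfolding indep_var_distribution_eq by simp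
  have gm: "g \<in> borel_measurable (distr M MX X \<Otimes>\<^sub>M distr M MY Y)"
    by (subst measurable_cong_sets[OF sets_pair_measure_cong[OF sets_distr sets_distr] refl]) simp
  have "(\<integral>\<^sup>+\<omega>. g (X \<omega>, Y \<omega>) \<partial>M) = integral\<^sup>N (distr M (MX \<Otimes>\<^sub>M MY) (\<lambda>x. (X x, Y x))) g"
    by (subst nn_integral_distr) auto
  also have "\<dots> = integral\<^sup>N (distr M MX X \<Otimes>\<^sub>M distr M MY Y) g" by (simp add: eq)
  also have "\<dots> = (\<integral>\<^sup>+y. (\<integral>\<^sup>+x. g (x, y) \<partial>distr M MX X) \<partial>distr M MY Y)"
    by (rule D.nn_integral_snd[symmetric, OF gm])
  also have "\<dots> = (\<integral>\<^sup>+y. (\<integral>\<^sup>+\<omega>. g (X \<omega>, y) \<partial>M) \<partial>distr M MY Y)"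
    by (intro nn_integral_cong, subst nn_integral_distr) auto
  finally show ?thesis .
qed



lemma exp_shift:
  fixes G :: "real \<Rightarrow> ennreal"
  assumes s: "0 \<le> s" and lam: "0 < lam" and G[measurable]: "G \<in> borel_measurable borel"
  shows "(\<integral>\<^sup>+x. ennreal (exponential_density lam x) * (indicator {s<..} x * G (x - s)) \<partial>lborel)
       = ennreal (exp (- lam * s)) * (\<integral>\<^sup>+x. ennreal (exponential_density lam x) * G x \<partial>lborel)"
proof -
  let ?f = "\<lambda>x. ennreal (exponential_density lam x) * (indicator {s<..} x * G (x - s))"
  have "(\<integral>\<^sup>+x. ?f x \<partial>lborel) = (\<integral>\<^sup>+x. ?f x \<partial>distr lborel borel ((+) s))"
    by (simp add: lborel_distr_plus)
  also have "\<dots> = (\<integral>\<^sup>+u. ?f (s + u) \<partial>lborel)"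
    by (subst nn_integral_distr) auto
  also have "\<dots> = (\<integral>\<^sup>+u. ennreal (exp (- lam * s)) * (ennreal (exponential_density lam u) * G u) \<partial>lborel)"
  proof (rule nn_integral_cong_AE)
    show "AE u in lborel. ?f (s + u) = ennreal (exp (- lam * s)) * (ennreal (exponential_density lam u) * G u)"
      using AE_lborel_singleton[of 0]
    proof eventually_elim
      case (elim u)
      show ?case
      proof (cases "0 < u")
        case True
        have "exponential_density lam (s + u) = exp (- lam * s) * exponential_density lam u"
          using True s by (simp add: exponential_density_def exp_add[symmetric] algebra_simps)
        moreover have "0 \<le> exponential_density lam u" using lam by (simp add: exponential_density_def)
        ultimately show ?thesis using True
          by (simp add: ennreal_mult mult.assoc indicator_def)
      next
        case False
        with elim have "u < 0" by simp
        then show ?thesis by (simp add: indicator_def exponential_density_def)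
      qed
    qed
  qed
  also have "\<dots> = ennreal (exp (- lam * s)) * (\<integral>\<^sup>+x. ennreal (exponential_density lam x) * G x \<partial>lborel)"
    by (rule nn_integral_cmult) (simp add: exponential_density_def)
  finally show ?thesis .
qed



definition good :: "'w measure \<Rightarrow> real \<Rightarrow> real measure \<Rightarrow> (nat \<Rightarrow> real) \<Rightarrow> (idx \<Rightarrow> 'w \<Rightarrow> real) \<Rightarrow> bool" where
  "good Q lam \<mu>S pB Z \<longleftrightarrow> prob_space Q \<and> 0 < lam \<and>
     prob_space.indep_vars Q (\<lambda>_. borel) Z UNIV \<and>
     (\<forall>j. distr Q borel (Z (Inl (Inl j))) = \<mu>S) \<and> (AE x in \<mu>S. 0 \<le> x) \<and>
     (\<forall>k. distributed Q lborel (Z (Inl (Inr k))) (exponential_density lam)) \<and>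
     (\<forall>k \<beta>. measure Q {\<omega> \<in> space Q. Z (Inr k) \<omega> = real \<beta>} = pB \<beta>)"

definition kind :: "idx \<Rightarrow> nat" where
  "kind i = (case i of Inl (Inl _) \<Rightarrow> 0 | Inl (Inr _) \<Rightarrow> 1 | Inr _ \<Rightarrow> 2)"

lemma kind_sh[simp]: "kind (shS i) = kind i" "kind (shE i) = kind i" "kind (shB i) = kind i"
  by (auto simp: kind_def shS_def shE_def shB_def split: sum.splits)

lemma kind_cases:
  "kind i = 0 \<Longrightarrow> \<exists>j. i = Inl (Inl j)" "kind i = 1 \<Longrightarrow> \<exists>j. i = Inl (Inr j)" "kind i = 2 \<Longrightarrow> \<exists>j. i = Inr j"
  by (auto simp: kind_def split: sum.splits)

lemma good_reidx:
  assumes g: "good Q lam \<mu>S pB Z" and inj: "inj \<sigma>" and k: "\<And>i. kind (\<sigma> i) = kind i"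
  shows "good Q lam \<mu>S pB (\<lambda>i. Z (\<sigma> i))"
proof -
  interpret prob_space Q using g by (simp add: good_def)
  have "indep_vars (\<lambda>_. borel) (\<lambda>i. Z (\<sigma> i)) UNIV"
    using indep_vars_reindex[of "\<lambda>_. borel" Z UNIV \<sigma> UNIV] g inj by (simp add: good_def)
  moreover have "\<exists>j'. \<sigma> (Inl (Inl j)) = Inl (Inl j')" for j
    using k[of "Inl (Inl j)"] kind_cases(1) by (simp add: kind_def)
  moreover have "\<exists>j'. \<sigma> (Inl (Inr j)) = Inl (Inr j')" for j
    using k[of "Inl (Inr j)"] kind_cases(2) by (simp add: kind_def)
  moreover have "\<exists>j'. \<sigma> (Inr j) = Inr j'" for j
    using k[of "Inr j"] kind_cases(3) by (simp add: kind_def)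
  ultimately show ?thesis using g unfolding good_def by metis
qed

lemma good_sh:
  assumes "good Q lam \<mu>S pB Z"
  shows "good Q lam \<mu>S pB (\<lambda>i. Z (shS i))" "good Q lam \<mu>S pB (\<lambda>i. Z (shE i))" "good Q lam \<mu>S pB (\<lambda>i. Z (shB i))"
  using good_reidx[OF assms] sh_inj by auto

lemma good_rv:
  assumes "good Q lam \<mu>S pB Z" shows "Z i \<in> borel_measurable Q"
proof -
  interpret prob_space Q using assms by (simp add: good_def)
  show ?thesis using assms by (simp add: good_def indep_vars_def)
qed

lemma good_vec:
  assumes "good Q lam \<mu>S pB Z" shows "(\<lambda>\<omega>. \<lambda>i. Z i \<omega>) \<in> measurable Q (PiM UNIV (\<lambda>_. borel))"
  by (rule measurable_PiM_single') (auto intro: good_rv[OF assms])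

lemma good_blocks:
  assumes "good Q lam \<mu>S pB Z" "A \<inter> B = {}"
  shows "prob_space.indep_var Q (PiM A (\<lambda>_. borel)) (\<lambda>\<omega>. restrict (\<lambda>i. Z i \<omega>) A) (PiM B (\<lambda>_. borel)) (\<lambda>\<omega>. restrict (\<lambda>i. Z i \<omega>) B)"
proof -
  interpret prob_space Q using assms by (simp add: good_def)
  show ?thesis using assms by (intro indep_var_restrict) (auto simp: good_def)
qed

lemma good_two:
  assumes "good Q lam \<mu>S pB Z" "i \<noteq> j"
  shows "prob_space.indep_var Q borel (Z i) borel (Z j)"
proof -
  interpret prob_space Q using assms by (simp add: good_def)
  have "indep_var borel ((\<lambda>x. x i) \<circ> (\<lambda>\<omega>. restrict (\<lambda>i. Z i \<omega>) {i})) borel ((\<lambda>x. x j) \<circ> (\<lambda>\<omega>. restrict (\<lambda>i. Z i \<omega>) {j}))"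
    using assms by (intro indep_var_compose[OF good_blocks[OF assms(1), of "{i}" "{j}"]]) auto
  moreover have "((\<lambda>x. x i) \<circ> (\<lambda>\<omega>. restrict (\<lambda>i. Z i \<omega>) {i})) = Z i" by (auto simp: fun_eq_iff)
  moreover have "((\<lambda>x. x j) \<circ> (\<lambda>\<omega>. restrict (\<lambda>i. Z i \<omega>) {j})) = Z j" by (auto simp: fun_eq_iff)
  ultimately show ?thesis by simp
qed


definition K0 :: "idx set" where "K0 = UNIV - {Inl (Inl 0), Inl (Inr 0)}"
definition pS :: "real measure \<Rightarrow> real \<Rightarrow> real" where "pS \<mu>S lam = (\<integral>x. exp (- lam * x) \<partial>\<mu>S)"

lemma emeasure_pred:
  assumes [measurable]: "Measurable.pred M P"
  shows "emeasure M {x\<in>space M. P x} = (\<integral>\<^sup>+x. of_bool (P x) \<partial>M)"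
proof -
  have "{x\<in>space M. P x} \<in> sets M" by measurable
  then have "emeasure M {x\<in>space M. P x} = (\<integral>\<^sup>+x. indicator {x\<in>space M. P x} x \<partial>M)" by simp
  also have "\<dots> = (\<integral>\<^sup>+x. of_bool (P x) \<partial>M)" by (intro nn_integral_cong) (auto simp: indicator_def)
  finally show ?thesis .
qed

lemma good_prob: "good Q lam \<mu>S pB Z \<Longrightarrow> prob_space Q" by (simp add: good_def)

lemma good_pS:
  assumes g: "good Q lam \<mu>S pB Z"
  shows "(\<integral>\<^sup>+s. ennreal (exp (- lam * s)) \<partial>\<mu>S) = ennreal (pS \<mu>S lam)"
    and "0 \<le> pS \<mu>S lam" "pS \<mu>S lam \<le> 1"
proof -
  interpret prob_space Q using g by (simp add: good_def)
  have muS: "\<mu>S = distr Q borel (Z (Inl (Inl 0)))" using g by (simp add: good_def)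
  interpret S: prob_space \<mu>S unfolding muS by (rule prob_space_distr) (rule good_rv[OF g])
  have ae: "AE x in \<mu>S. 0 \<le> x" using g by (simp add: good_def)
  have lam: "0 < lam" using g by (simp add: good_def)
  have int: "integrable \<mu>S (\<lambda>s. exp (- lam * s))"
  proof (rule Bochner_Integration.integrable_bound[where f="\<lambda>_. 1::real"])
    show "integrable \<mu>S (\<lambda>_. 1::real)" by simp
    show "(\<lambda>s. exp (- lam * s)) \<in> borel_measurable \<mu>S" unfolding muS by simp
    show "AE x in \<mu>S. norm (exp (- lam * x)) \<le> norm (1::real)"
      using ae by eventually_elim (use lam in simp)
  qed
  show "(\<integral>\<^sup>+s. ennreal (exp (- lam * s)) \<partial>\<mu>S) = ennreal (pS \<mu>S lam)"
    unfolding pS_def by (rule nn_integral_eq_integral[OF int]) simp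
  show "0 \<le> pS \<mu>S lam" unfolding pS_def by simp
  have "pS \<mu>S lam \<le> (\<integral>x. 1 \<partial>\<mu>S)" unfolding pS_def
    by (rule integral_mono_AE[OF int]) (use ae lam in \<open>auto elim: eventually_mono\<close>)
  then show "pS \<mu>S lam \<le> 1" by (simp add: S.prob_space)
qed

lemma memoryless:
  assumes g: "good Q lam \<mu>S pB Z"
    and F[measurable]: "Measurable.pred (borel \<Otimes>\<^sub>M PiM K0 (\<lambda>_. borel)) (\<lambda>(u,w). F u w)"
  shows "emeasure Q {\<omega>\<in>space Q. Z (Inl (Inl 0)) \<omega> < Z (Inl (Inr 0)) \<omega> \<and>
            F (Z (Inl (Inr 0)) \<omega> - Z (Inl (Inl 0)) \<omega>) (restrict (\<lambda>i. Z i \<omega>) K0)}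
       = ennreal (pS \<mu>S lam) * emeasure Q {\<omega>\<in>space Q. F (Z (Inl (Inr 0)) \<omega>) (restrict (\<lambda>i. Z i \<omega>) K0)}"
proof -
  interpret prob_space Q using g by (simp add: good_def)
  define s0 :: idx where "s0 = Inl (Inl 0)"
  define e0 :: idx where "e0 = Inl (Inr 0)"
  have rv[measurable]: "\<And>i. Z i \<in> borel_measurable Q" by (rule good_rv[OF g])
  have lam: "0 < lam" using g by (simp add: good_def)
  have muS: "distr Q borel (Z s0) = \<mu>S" using g by (simp add: good_def s0_def)
  have aeS: "AE x in \<mu>S. 0 \<le> x" using g by (simp add: good_def)
  have de: "distributed Q lborel (Z e0) (exponential_density lam)" using g by (simp add: good_def e0_def)
  have K0: "s0 \<notin> K0" "e0 \<notin> K0" by (auto simp: K0_def s0_def e0_def)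
  define W where "W \<omega> = restrict (\<lambda>i. Z i \<omega>) K0" for \<omega>
  have W[measurable]: "W \<in> measurable Q (PiM K0 (\<lambda>_. borel))" unfolding W_def by measurable
  define \<Phi> where "\<Phi> w = (\<integral>\<^sup>+\<omega>. of_bool (F (Z e0 \<omega>) w) \<partial>Q)" for w
  have \<Phi>m[measurable]: "\<Phi> \<in> borel_measurable (PiM K0 (\<lambda>_. borel))" unfolding \<Phi>_def by measurable
  have etr: "(\<integral>\<^sup>+\<omega>. h (Z e0 \<omega>) \<partial>Q) = (\<integral>\<^sup>+x. ennreal (exponential_density lam x) * h x \<partial>lborel)"
    if [measurable]: "h \<in> borel_measurable borel" for h
  proof -
    have "(\<integral>\<^sup>+\<omega>. h (Z e0 \<omega>) \<partial>Q) = (\<integral>\<^sup>+x. h x \<partial>distr Q lborel (Z e0))"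
      by (subst nn_integral_distr) (auto simp: distributed_measurable[OF de])
    also have "\<dots> = (\<integral>\<^sup>+x. h x \<partial>density lborel (exponential_density lam))"
      by (simp add: distributed_distr_eq_density[OF de])
    also have "\<dots> = (\<integral>\<^sup>+x. ennreal (exponential_density lam x) * h x \<partial>lborel)"
      by (subst nn_integral_density) (auto simp: exponential_density_def)
    finally show ?thesis .
  qed
  have inner: "(\<integral>\<^sup>+\<omega>. of_bool (Z s0 \<omega> < Z e0 \<omega> \<and> F (Z e0 \<omega> - Z s0 \<omega>) w) \<partial>Q) = ennreal (pS \<mu>S lam) * \<Phi> w"
    if w: "w \<in> space (PiM K0 (\<lambda>_. borel))" for w
  proof -
    have wm[measurable]: "Measurable.pred borel (\<lambda>u. F u w)"
      using measurable_compose[OF measurable_Pair2'[OF w] F] by simp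
    have "(\<integral>\<^sup>+\<omega>. of_bool (Z s0 \<omega> < Z e0 \<omega> \<and> F (Z e0 \<omega> - Z s0 \<omega>) w) \<partial>Q)
        = (\<integral>\<^sup>+\<omega>. (\<lambda>(e,s). of_bool (s < e \<and> F (e - s) w) :: ennreal) (Z e0 \<omega>, Z s0 \<omega>) \<partial>Q)" by simp
    also have "\<dots> = (\<integral>\<^sup>+s. (\<integral>\<^sup>+\<omega>. of_bool (s < Z e0 \<omega> \<and> F (Z e0 \<omega> - s) w) \<partial>Q) \<partial>distr Q borel (Z s0))"
      by (subst cond[OF good_two[OF g]]) (auto simp: s0_def e0_def)
    also have "\<dots> = (\<integral>\<^sup>+s. ennreal (exp (- lam * s)) * \<Phi> w \<partial>\<mu>S)"
      unfolding muS
    proof (rule nn_integral_cong_AE)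
      show "AE s in \<mu>S. (\<integral>\<^sup>+\<omega>. of_bool (s < Z e0 \<omega> \<and> F (Z e0 \<omega> - s) w) \<partial>Q) = ennreal (exp (- lam * s)) * \<Phi> w"
        using aeS
      proof eventually_elim
        case (elim s)
        have "(\<integral>\<^sup>+\<omega>. of_bool (s < Z e0 \<omega> \<and> F (Z e0 \<omega> - s) w) \<partial>Q)
            = (\<integral>\<^sup>+x. ennreal (exponential_density lam x) * of_bool (s < x \<and> F (x - s) w) \<partial>lborel)"
          by (rule etr) measurable
        also have "\<dots> = (\<integral>\<^sup>+x. ennreal (exponential_density lam x) * (indicator {s<..} x * of_bool (F (x - s) w)) \<partial>lborel)"
          by (intro nn_integral_cong) (auto simp: indicator_def)
        also have "\<dots> = ennreal (exp (- lam * s)) * (\<integral>\<^sup>+x. ennreal (exponential_density lam x) * of_bool (F x w) \<partial>lborel)"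
          by (rule exp_shift[OF elim lam]) measurable
        also have "\<dots> = ennreal (exp (- lam * s)) * \<Phi> w"
          unfolding \<Phi>_def by (subst etr) auto
        finally show ?case .
      qed
    qed
    also have "\<dots> = (\<integral>\<^sup>+s. ennreal (exp (- lam * s)) \<partial>\<mu>S) * \<Phi> w"
      unfolding muS[symmetric] by (rule nn_integral_multc) measurable
    also have "\<dots> = ennreal (pS \<mu>S lam) * \<Phi> w" using good_pS(1)[OF g] by simp
    finally show ?thesis .
  qed
  have "emeasure Q {\<omega>\<in>space Q. Z s0 \<omega> < Z e0 \<omega> \<and> F (Z e0 \<omega> - Z s0 \<omega>) (W \<omega>)}
      = (\<integral>\<^sup>+\<omega>. of_bool (Z s0 \<omega> < Z e0 \<omega> \<and> F (Z e0 \<omega> - Z s0 \<omega>) (W \<omega>)) \<partial>Q)"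
    by (rule emeasure_pred) measurable
  also have "\<dots> = (\<integral>\<^sup>+\<omega>. (\<lambda>(x,w). of_bool (x s0 < x e0 \<and> F (x e0 - x s0) w) :: ennreal)
                    (restrict (\<lambda>i. Z i \<omega>) {s0, e0}, W \<omega>) \<partial>Q)"
    by simp
  also have "\<dots> = (\<integral>\<^sup>+w. (\<integral>\<^sup>+\<omega>. of_bool (Z s0 \<omega> < Z e0 \<omega> \<and> F (Z e0 \<omega> - Z s0 \<omega>) w) \<partial>Q) \<partial>distr Q (PiM K0 (\<lambda>_. borel)) W)"
    unfolding W_def
    by (subst cond[OF good_blocks[OF g]]) (auto simp: K0)
  also have "\<dots> = (\<integral>\<^sup>+w. ennreal (pS \<mu>S lam) * \<Phi> w \<partial>distr Q (PiM K0 (\<lambda>_. borel)) W)"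
    by (intro nn_integral_cong inner) simp
  also have "\<dots> = ennreal (pS \<mu>S lam) * (\<integral>\<^sup>+w. \<Phi> w \<partial>distr Q (PiM K0 (\<lambda>_. borel)) W)"
    by (rule nn_integral_cmult) simp
  also have "(\<integral>\<^sup>+w. \<Phi> w \<partial>distr Q (PiM K0 (\<lambda>_. borel)) W)
      = (\<integral>\<^sup>+\<omega>. (\<lambda>(x,w). of_bool (F (x e0) w) :: ennreal) (restrict (\<lambda>i. Z i \<omega>) {e0}, W \<omega>) \<partial>Q)"
    unfolding W_def \<Phi>_def
    by (subst cond[OF good_blocks[OF g]]) (auto simp: K0)
  also have "\<dots> = emeasure Q {\<omega>\<in>space Q. F (Z e0 \<omega>) (W \<omega>)}"
    by (subst emeasure_pred) auto
  finally show ?thesis by (simp only: W_def s0_def e0_def)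
qed


definition K1 :: "idx set" where "K1 = UNIV - {Inr 0}"

lemma K0_mem: "shE (shS x) \<in> K0"
  by (auto simp: K0_def shE_def shS_def split: sum.splits)
lemma K1_mem: "shE (shB x) \<in> K1"
  by (auto simp: K1_def shE_def shB_def split: sum.splits)

lemma K0_mem': "(shE \<circ> shS) x \<in> K0" by (simp add: K0_mem)
lemma K1_mem': "(shE \<circ> shB) x \<in> K1" by (simp add: K1_mem)

lemma restrict_comp: "(\<And>i. \<sigma> i \<in> K) \<Longrightarrow> restrict f K \<circ> \<sigma> = f \<circ> \<sigma>"
  by (auto simp: fun_eq_iff)

lemma hit_meas_comp[measurable (raw)]:
  assumes "f \<in> borel_measurable M" "g \<in> measurable M (PiM UNIV (\<lambda>_::idx. borel :: real measure))"
  shows "Measurable.pred M (\<lambda>x. hit m N n (f x) (g x))"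
  using measurable_compose[OF measurable_Pair[OF assms] hit_meas[of m N n]] by simp

lemma comp_meas:
  assumes "g \<in> measurable M (PiM K (\<lambda>_. borel :: real measure))" "\<And>i. \<sigma> i \<in> K"
  shows "(\<lambda>x. g x \<circ> \<sigma>) \<in> measurable M (PiM UNIV (\<lambda>_::idx. borel :: real measure))"
  using measurable_compose[OF assms(1) reidx_meas[OF assms(2)]] by simp

lemma indep_prob:
  assumes Q: "prob_space Q" and ind: "prob_space.indep_var Q MX X MY Y"
    and P1[measurable]: "Measurable.pred MX P1" and P2[measurable]: "Measurable.pred MY P2"
  shows "measure Q {\<omega>\<in>space Q. P1 (X \<omega>) \<and> P2 (Y \<omega>)} = measure Q {\<omega>\<in>space Q. P1 (X \<omega>)} * measure Q {\<omega>\<in>space Q. P2 (Y \<omega>)}"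
proof -
  interpret prob_space Q by (rule Q)
  have rX: "X \<in> measurable Q MX" and rY: "Y \<in> measurable Q MY"
    using indep_var_rv1[OF ind] indep_var_rv2[OF ind] by auto
  have "prob ((\<lambda>x. (X x, Y x)) -` ({x\<in>space MX. P1 x} \<times> {x\<in>space MY. P2 x}) \<inter> space Q) =
    prob (X -` {x\<in>space MX. P1 x} \<inter> space Q) * prob (Y -` {x\<in>space MY. P2 x} \<inter> space Q)"
    by (rule indep_varD[OF ind]) measurable
  moreover have "(\<lambda>x. (X x, Y x)) -` ({x\<in>space MX. P1 x} \<times> {x\<in>space MY. P2 x}) \<inter> space Q = {\<omega>\<in>space Q. P1 (X \<omega>) \<and> P2 (Y \<omega>)}"
    using measurable_space[OF rX] measurable_space[OF rY] by auto
  moreover have "X -` {x\<in>space MX. P1 x} \<inter> space Q = {\<omega>\<in>space Q. P1 (X \<omega>)}"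
    using measurable_space[OF rX] by auto
  moreover have "Y -` {x\<in>space MY. P2 x} \<inter> space Q = {\<omega>\<in>space Q. P2 (Y \<omega>)}"
    using measurable_space[OF rY] by auto
  ultimately show ?thesis by simp
qed

abbreviation "MAIN Q lam \<mu>S pB m N \<equiv> (\<forall>Z. good Q lam \<mu>S pB Z \<longrightarrow>
   (\<forall>n. measure Q {\<omega>\<in>space Q. hit m N n (Z (Inl (Inr 0)) \<omega>) ((\<lambda>i. Z i \<omega>) \<circ> shE)} = H (pS \<mu>S lam) pB m N n))"

lemma bstep:
  assumes g: "good Q lam \<mu>S pB Z" and IH: "MAIN Q lam \<mu>S pB m N"
  shows "(\<lambda>\<beta>. pB \<beta> * H (pS \<mu>S lam) pB m N (n + \<beta>)) sums
     measure Q {\<omega>\<in>space Q. \<exists>\<beta>. Z (Inr 0) \<omega> = real \<beta> \<and> hit m N (n + \<beta>) (Z (Inl (Inr 0)) \<omega>) ((\<lambda>i. Z i \<omega>) \<circ> shE \<circ> shB)}"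
proof -
  interpret prob_space Q using g by (simp add: good_def)
  have rv[measurable]: "\<And>i. Z i \<in> borel_measurable Q" by (rule good_rv[OF g])
  have vec[measurable]: "(\<lambda>\<omega>. \<lambda>i. Z i \<omega>) \<in> measurable Q (PiM UNIV (\<lambda>_. borel))" by (rule good_vec[OF g])
  define A where "A \<beta> = {\<omega>\<in>space Q. Z (Inr 0) \<omega> = real \<beta> \<and> hit m N (n + \<beta>) (Z (Inl (Inr 0)) \<omega>) ((\<lambda>i. Z i \<omega>) \<circ> shE \<circ> shB)}" for \<beta>
  have cm: "(\<lambda>\<omega>. (\<lambda>i. Z i \<omega>) \<circ> shE \<circ> shB) \<in> measurable Q (PiM UNIV (\<lambda>_. borel))"
    using comp_meas[OF vec, of "shE \<circ> shB"] by (simp add: comp_assoc)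
  have Am: "A \<beta> \<in> sets Q" for \<beta> unfolding A_def using cm by measurable
  have disj: "disjoint_family A" unfolding disjoint_family_on_def A_def by auto
  have UA: "(\<Union>\<beta>. A \<beta>) = {\<omega>\<in>space Q. \<exists>\<beta>. Z (Inr 0) \<omega> = real \<beta> \<and> hit m N (n + \<beta>) (Z (Inl (Inr 0)) \<omega>) ((\<lambda>i. Z i \<omega>) \<circ> shE \<circ> shB)}"
    unfolding A_def by auto
  have mA: "measure Q (A \<beta>) = pB \<beta> * H (pS \<mu>S lam) pB m N (n + \<beta>)" for \<beta>
  proof -
    define W where "W \<omega> = restrict (\<lambda>i. Z i \<omega>) K1" for \<omega>
    have W[measurable]: "W \<in> measurable Q (PiM K1 (\<lambda>_. borel))" unfolding W_def by measurable
    have e0K1: "Inl (Inr 0) \<in> K1" by (simp add: K1_def)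
    have "A \<beta> = {\<omega>\<in>space Q. (\<lambda>x. x (Inr 0) = real \<beta>) (restrict (\<lambda>i. Z i \<omega>) {Inr 0}) \<and>
        (\<lambda>w. hit m N (n + \<beta>) (w (Inl (Inr 0))) (w \<circ> (shE \<circ> shB))) (W \<omega>)}"
      unfolding A_def W_def using e0K1
      by (simp add: comp_assoc restrict_comp[of "shE \<circ> shB" K1, OF K1_mem'])
    also have "measure Q \<dots> = measure Q {\<omega>\<in>space Q. (\<lambda>x. x (Inr 0) = real \<beta>) (restrict (\<lambda>i. Z i \<omega>) {Inr 0})} *
        measure Q {\<omega>\<in>space Q. (\<lambda>w. hit m N (n + \<beta>) (w (Inl (Inr 0))) (w \<circ> (shE \<circ> shB))) (W \<omega>)}"
      unfolding W_def
    proof (rule indep_prob[OF prob_space_axioms good_blocks[OF g]])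
      show "Measurable.pred (PiM K1 (\<lambda>_. borel)) (\<lambda>w. hit m N (n + \<beta>) (w (Inl (Inr 0))) (w \<circ> (shE \<circ> shB)))"
        using comp_meas[OF measurable_ident_sets[OF refl], of "shE \<circ> shB" K1] K1_mem' e0K1 by measurable
    qed (auto simp: K1_def)
    also have "measure Q {\<omega>\<in>space Q. (\<lambda>x. x (Inr 0) = real \<beta>) (restrict (\<lambda>i. Z i \<omega>) {Inr 0})} = pB \<beta>"
      using g by (simp add: good_def)
    also have "{\<omega>\<in>space Q. (\<lambda>w. hit m N (n + \<beta>) (w (Inl (Inr 0))) (w \<circ> (shE \<circ> shB))) (W \<omega>)}
       = {\<omega>\<in>space Q. hit m N (n + \<beta>) ((\<lambda>i. Z (shB i)) (Inl (Inr 0)) \<omega>) ((\<lambda>i. (\<lambda>i. Z (shB i)) i \<omega>) \<circ> shE)}"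
    proof -
      have "\<And>\<omega>. (\<lambda>i\<in>K1. Z i \<omega>) \<circ> (shE \<circ> shB) = (\<lambda>i. Z (shB i) \<omega>) \<circ> shE"
        using K1_mem by (auto simp: fun_eq_iff) (metis comp_apply sh_comm(3))
      then show ?thesis unfolding W_def using e0K1 by simp
    qed
    also have "measure Q \<dots> = H (pS \<mu>S lam) pB m N (n + \<beta>)"
      using IH good_sh(3)[OF g] by blast
    finally show ?thesis .
  qed
  show ?thesis
    using finite_measure_UNION[of A] Am disj unfolding UA mA by auto
qed



lemma main: "MAIN Q lam \<mu>S pB m N"
proof (induction N)
  case 0
  show ?case
  proof (intro allI impI)
    fix Z n assume g: "good Q lam \<mu>S pB Z"
    interpret prob_space Q using g by (simp add: good_def)
    show "measure Q {\<omega>\<in>space Q. hit m 0 n (Z (Inl (Inr 0)) \<omega>) ((\<lambda>i. Z i \<omega>) \<circ> shE)} = H (pS \<mu>S lam) pB m 0 n"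
      by (cases "m < n") (simp_all add: prob_space)
  qed
next
  case (Suc N)
  note IH = Suc.IH
  show ?case
  proof (intro allI impI)
    fix Z n assume g: "good Q lam \<mu>S pB Z"
    interpret prob_space Q using g by (simp add: good_def)
    have rv[measurable]: "\<And>i. Z i \<in> borel_measurable Q" by (rule good_rv[OF g])
    have vec[measurable]: "(\<lambda>\<omega>. \<lambda>i. Z i \<omega>) \<in> measurable Q (PiM UNIV (\<lambda>_. borel))" by (rule good_vec[OF g])
    define p where "p = pS \<mu>S lam"
    define s0 :: idx where "s0 = Inl (Inl 0)"
    define e0 :: idx where "e0 = Inl (Inr 0)"
    define W where "W \<omega> = restrict (\<lambda>i. Z i \<omega>) K0" for \<omega>
    have W[measurable]: "W \<in> measurable Q (PiM K0 (\<lambda>_. borel))" unfolding W_def by measurable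
    have Wc: "W \<omega> \<circ> (shE \<circ> shS) = (\<lambda>i. Z i \<omega>) \<circ> (shE \<circ> shS)" for \<omega>
      unfolding W_def by (rule restrict_comp[OF K0_mem'])
    have Wc2: "W \<omega> \<circ> (shE \<circ> shS \<circ> shE \<circ> shB) = (\<lambda>i. Z i \<omega>) \<circ> (shE \<circ> shS \<circ> shE \<circ> shB)" for \<omega>
      unfolding W_def by (rule restrict_comp) (simp add: K0_mem)
    have inK0: "Inr 0 \<in> K0" "Inl (Inr (Suc 0)) \<in> K0" "s0 \<notin> K0" "e0 \<notin> K0"
      by (auto simp: K0_def s0_def e0_def)
    show "measure Q {\<omega>\<in>space Q. hit m (Suc N) n (Z (Inl (Inr 0)) \<omega>) ((\<lambda>i. Z i \<omega>) \<circ> shE)} = H (pS \<mu>S lam) pB m (Suc N) n"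
    proof (cases "m < n \<or> n = 0")
      case True
      then show ?thesis by (auto simp: prob_space)
    next
      case False
      define E1 where "E1 = {\<omega>\<in>space Q. Z s0 \<omega> < Z e0 \<omega> \<and> hit m N (n - 1) (Z e0 \<omega> - Z s0 \<omega>) (W \<omega> \<circ> (shE \<circ> shS))}"
      define P2 where "P2 w = (\<exists>\<beta>. w (Inr 0) = real \<beta> \<and> hit m N (n + \<beta>) (w (Inl (Inr (Suc 0)))) (w \<circ> (shE \<circ> shS \<circ> shE \<circ> shB)))" for w
      define E2 where "E2 = {\<omega>\<in>space Q. \<not> Z s0 \<omega> < Z e0 \<omega> \<and> P2 (W \<omega>)}"
      have c4: "\<And>i. (shE \<circ> shS \<circ> shE \<circ> shB) i \<in> K0" by (simp add: K0_mem)
      have cm4[measurable]: "(\<lambda>w::idx\<Rightarrow>real. w \<circ> (shE \<circ> shS \<circ> shE \<circ> shB)) \<in> measurable (PiM K0 (\<lambda>_. borel)) (PiM UNIV (\<lambda>_. borel))"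
        by (rule reidx_meas) (simp add: K0_mem)
      have eqm[measurable]: "\<And>\<beta>. Measurable.pred (PiM K0 (\<lambda>_. borel)) (\<lambda>w::idx\<Rightarrow>real. w (Inr 0) = real \<beta>)"
        by (rule pred_eq_const1[where N=borel]) (use inK0 in auto)
      have P2m[measurable]: "Measurable.pred (PiM K0 (\<lambda>_. borel)) P2"
        unfolding P2_def using inK0 by measurable
      have F1m: "Measurable.pred (borel \<Otimes>\<^sub>M PiM K0 (\<lambda>_. borel)) (\<lambda>(u, w). hit m N (n - 1) u (w \<circ> (shE \<circ> shS)))"
        using comp_meas[OF measurable_snd, of "shE \<circ> shS" K0] K0_mem' by (simp add: split_beta') measurable
      have E1m: "E1 \<in> sets Q" unfolding E1_def using comp_meas[OF W K0_mem'] by measurable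
      have E2m: "E2 \<in> sets Q" unfolding E2_def by measurable
      have set: "{\<omega>\<in>space Q. hit m (Suc N) n (Z (Inl (Inr 0)) \<omega>) ((\<lambda>i. Z i \<omega>) \<circ> shE)} = E1 \<union> E2"
        using False unfolding E1_def E2_def P2_def Wc Wc2
        using inK0 by (auto simp: s0_def e0_def comp_assoc W_def)
      have "measure Q (E1 \<union> E2) = measure Q E1 + measure Q E2"
        by (rule finite_measure_Union[OF E1m E2m]) (auto simp: E1_def E2_def)
      moreover have "measure Q E1 = p * H p pB m N (n - 1)"
      proof -
        have "emeasure Q E1 = ennreal p * emeasure Q {\<omega>\<in>space Q. hit m N (n - 1) (Z e0 \<omega>) (W \<omega> \<circ> (shE \<circ> shS))}"
          unfolding E1_def p_def W_def s0_def e0_def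
          by (rule memoryless[OF g, where F="\<lambda>u w. hit m N (n - 1) u (w \<circ> (shE \<circ> shS))", OF F1m])
        moreover have "{\<omega>\<in>space Q. hit m N (n - 1) (Z e0 \<omega>) (W \<omega> \<circ> (shE \<circ> shS))}
            = {\<omega>\<in>space Q. hit m N (n - 1) ((\<lambda>i. Z (shS i)) (Inl (Inr 0)) \<omega>) ((\<lambda>i. (\<lambda>i. Z (shS i)) i \<omega>) \<circ> shE)}"
        proof -
          have "\<And>\<omega>. (\<lambda>i. Z i \<omega>) \<circ> (shE \<circ> shS) = (\<lambda>i. Z (shS i) \<omega>) \<circ> shE"
            by (auto simp: fun_eq_iff) (metis comp_apply sh_comm(1))
          then show ?thesis unfolding Wc by (simp add: e0_def)
        qed
        moreover have "measure Q \<dots> = H p pB m N (n - 1)"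
          unfolding p_def using IH good_sh(1)[OF g] by blast
        moreover have "0 \<le> p" unfolding p_def using good_pS(2)[OF g] .
        ultimately show ?thesis by (simp add: measure_def enn2real_mult)
      qed
      moreover have "measure Q E2 = (1 - p) * (\<Sum>\<beta>. pB \<beta> * H p pB m N (n + \<beta>))"
      proof -
        have "measure Q E2 = measure Q {\<omega>\<in>space Q. (\<lambda>x. \<not> x s0 < x e0) (restrict (\<lambda>i. Z i \<omega>) {s0, e0}) \<and> P2 (W \<omega>)}"
          unfolding E2_def by simp
        also have "\<dots> = measure Q {\<omega>\<in>space Q. (\<lambda>x. \<not> x s0 < x e0) (restrict (\<lambda>i. Z i \<omega>) {s0, e0})} *
                       measure Q {\<omega>\<in>space Q. P2 (W \<omega>)}"
          unfolding W_def
          by (rule indep_prob[OF prob_space_axioms good_blocks[OF g]]) (use inK0 in \<open>auto simp: s0_def e0_def\<close>)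
        also have "measure Q {\<omega>\<in>space Q. (\<lambda>x. \<not> x s0 < x e0) (restrict (\<lambda>i. Z i \<omega>) {s0, e0})} = 1 - p"
        proof -
          have "emeasure Q {\<omega>\<in>space Q. Z s0 \<omega> < Z e0 \<omega> \<and> True} = ennreal p * emeasure Q {\<omega>\<in>space Q. True}"
            unfolding p_def s0_def e0_def by (rule memoryless[OF g, where F="\<lambda>u w. True"]) simp
          then have "measure Q {\<omega>\<in>space Q. Z s0 \<omega> < Z e0 \<omega>} = p"
            using good_pS(2)[OF g] by (simp add: emeasure_eq_measure prob_space p_def)
          moreover have "{\<omega>\<in>space Q. (\<lambda>x. \<not> x s0 < x e0) (restrict (\<lambda>i. Z i \<omega>) {s0, e0})}
              = space Q - {\<omega>\<in>space Q. Z s0 \<omega> < Z e0 \<omega>}" by auto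
          moreover have "{\<omega>\<in>space Q. Z s0 \<omega> < Z e0 \<omega>} \<in> sets Q" by measurable
          ultimately show ?thesis by (simp add: prob_compl)
        qed
        also have "measure Q {\<omega>\<in>space Q. P2 (W \<omega>)} = (\<Sum>\<beta>. pB \<beta> * H p pB m N (n + \<beta>))"
        proof -
          have g2: "good Q lam \<mu>S pB (\<lambda>i. Z (shE (shS i)))"
            using good_sh(1)[OF good_sh(2)[OF g]] by simp
          have "{\<omega>\<in>space Q. P2 (W \<omega>)} = {\<omega>\<in>space Q. \<exists>\<beta>. (\<lambda>i. Z (shE (shS i))) (Inr 0) \<omega> = real \<beta> \<and>
              hit m N (n + \<beta>) ((\<lambda>i. Z (shE (shS i))) (Inl (Inr 0)) \<omega>) ((\<lambda>i. (\<lambda>i. Z (shE (shS i))) i \<omega>) \<circ> shE \<circ> shB)}"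
            unfolding P2_def Wc2 W_def using inK0 by (simp add: comp_def K0_mem)
          then show ?thesis
            using sums_unique[OF bstep[OF g2 IH, of n]] p_def by simp
        qed
        finally show ?thesis .
      qed
      ultimately show ?thesis using False set by (simp add: p_def)
    qed
  qed
qed




lemma side:
  fixes P :: "'a measure" and s e :: "nat \<Rightarrow> 'a \<Rightarrow> real" and b :: "nat \<Rightarrow> 'a \<Rightarrow> nat"
  assumes inp: "lcfs_input P lam s e b"
  defines "Z \<equiv> (\<lambda>i \<omega>. case i of Inl (Inl j) \<Rightarrow> s j \<omega> | Inl (Inr k) \<Rightarrow> e k \<omega> | Inr k \<Rightarrow> real (b k \<omega>))"
  defines "\<mu>S \<equiv> distr P borel (s 0)"
  defines "pB \<equiv> (\<lambda>\<beta>. measure P {\<omega>\<in>space P. b 0 \<omega> = \<beta>})"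
  shows "good P lam \<mu>S pB Z" "hpar pB"
    "(\<lambda>N. \<Sum>\<beta>. pB \<beta> * H (pS \<mu>S lam) pB m N \<beta>) \<longlonglongrightarrow>
       measure P {\<omega>\<in>space P. enat m < lcfs_busy_max (\<lambda>j. s j \<omega>) (\<lambda>k. e k \<omega>) (\<lambda>k. b k \<omega>)}"
    "pS \<mu>S lam = (\<integral>\<omega>. exp (- lam * s 0 \<omega>) \<partial>P)"
proof -
  interpret prob_space P using inp by (simp add: lcfs_input_def)
  have ind: "indep_vars (\<lambda>_. borel) Z UNIV" using inp by (simp add: lcfs_input_def Z_def)
  have rvZ: "\<And>i. Z i \<in> borel_measurable P" using ind by (simp add: indep_vars_def)
  have rs[measurable]: "s j \<in> borel_measurable P" for j using rvZ[of "Inl (Inl j)"] by (simp add: Z_def)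
  have rb[measurable]: "b k \<in> measurable P (count_space UNIV)" for k using inp by (simp add: lcfs_input_def)
  have bk: "measure P {\<omega>\<in>space P. b k \<omega> = \<beta>} = pB \<beta>" for k \<beta>
  proof -
    have "measure P {\<omega>\<in>space P. b k \<omega> = \<beta>} = measure (distr P (count_space UNIV) (b k)) {\<beta>}"
      by (subst measure_distr) (auto intro!: arg_cong[where f="measure P"])
    also have "\<dots> = measure (distr P (count_space UNIV) (b 0)) {\<beta>}"
    proof -
      have "distr P (count_space UNIV) (b k) = distr P (count_space UNIV) (b 0)"
        using inp unfolding lcfs_input_def by blast
      then show ?thesis by simp
    qed
    also have "\<dots> = pB \<beta>" unfolding pB_def
      by (subst measure_distr) (auto intro!: arg_cong[where f="measure P"])
    finally show ?thesis .
  qed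
  show g: "good P lam \<mu>S pB Z"
    unfolding good_def
  proof (intro conjI allI)
    show "prob_space P" by (rule prob_space_axioms)
    show "0 < lam" using inp by (simp add: lcfs_input_def)
    show "indep_vars (\<lambda>_. borel) Z UNIV" by (rule ind)
    show "distr P borel (Z (Inl (Inl j))) = \<mu>S" for j
      using inp by (simp add: lcfs_input_def Z_def \<mu>S_def)
    show "AE x in \<mu>S. 0 \<le> x"
      unfolding \<mu>S_def using inp by (subst AE_distr_iff) (auto simp: lcfs_input_def)
    show "distributed P lborel (Z (Inl (Inr k))) (exponential_density lam)" for k
      using inp by (simp add: lcfs_input_def Z_def)
    show "measure P {\<omega> \<in> space P. Z (Inr k) \<omega> = real \<beta>} = pB \<beta>" for k \<beta>
      using bk[of k \<beta>] by (simp add: Z_def)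
  qed
  show "hpar pB"
  proof
    show "0 \<le> pB \<beta>" for \<beta> by (simp add: pB_def)
    have "(\<lambda>\<beta>. measure P {\<omega>\<in>space P. b 0 \<omega> = \<beta>}) sums measure P (\<Union>\<beta>. {\<omega>\<in>space P. b 0 \<omega> = \<beta>})"
      by (rule finite_measure_UNION) (auto simp: disjoint_family_on_def)
    moreover have "(\<Union>\<beta>. {\<omega>\<in>space P. b 0 \<omega> = \<beta>}) = space P" by auto
    ultimately show "pB sums 1" by (simp add: pB_def prob_space)
  qed
  show "pS \<mu>S lam = (\<integral>\<omega>. exp (- lam * s 0 \<omega>) \<partial>P)"
    unfolding pS_def \<mu>S_def by (subst integral_distr) auto
  define A where "A N = {\<omega>\<in>space P. \<exists>i\<le>N. m < fst (lcfs_path (\<lambda>j. s j \<omega>) (\<lambda>k. e k \<omega>) (\<lambda>k. b k \<omega>) i)}" for N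
  have zzeq: "zz (\<lambda>j. s j \<omega>) (\<lambda>k. e k \<omega>) (\<lambda>k. b k \<omega>) 0 1 = (\<lambda>i. Z i \<omega>) \<circ> shE \<circ> shB" for \<omega>
    by (auto simp: fun_eq_iff zz_def Z_def shE_def shB_def split: sum.splits)
  have Aeq: "A N = {\<omega>\<in>space P. \<exists>\<beta>. Z (Inr 0) \<omega> = real \<beta> \<and> hit m N (0 + \<beta>) (Z (Inl (Inr 0)) \<omega>) ((\<lambda>i. Z i \<omega>) \<circ> shE \<circ> shB)}" for N
    unfolding A_def lcfs_path_def conn zzeq[symmetric] by (auto simp: Z_def)
  have sums: "(\<lambda>\<beta>. pB \<beta> * H (pS \<mu>S lam) pB m N \<beta>) sums measure P (A N)" for N
    using bstep[OF g main, where m=m and N=N and n=0] unfolding Aeq by simp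
  have vec[measurable]: "(\<lambda>\<omega>. \<lambda>i. Z i \<omega>) \<in> measurable P (PiM UNIV (\<lambda>_. borel))" by (rule good_vec[OF g])
  have rvZ'[measurable]: "\<And>i. Z i \<in> borel_measurable P" by (rule rvZ)
  have cm: "(\<lambda>\<omega>. (\<lambda>i. Z i \<omega>) \<circ> shE \<circ> shB) \<in> measurable P (PiM UNIV (\<lambda>_. borel))"
    using comp_meas[OF vec, of "shE \<circ> shB"] by (simp add: comp_assoc)
  have Am: "A N \<in> sets P" for N unfolding Aeq using cm by measurable
  have inc: "incseq A" unfolding incseq_def A_def by (auto intro: order_trans)
  have UA: "(\<Union>N. A N) = {\<omega>\<in>space P. enat m < lcfs_busy_max (\<lambda>j. s j \<omega>) (\<lambda>k. e k \<omega>) (\<lambda>k. b k \<omega>)}"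
    unfolding A_def lcfs_busy_max_def by (auto simp: less_SUP_iff)
  have "(\<lambda>N. measure P (A N)) \<longlonglongrightarrow> measure P (\<Union>N. A N)"
    by (rule finite_Lim_measure_incseq) (use Am inc in auto)
  then show "(\<lambda>N. \<Sum>\<beta>. pB \<beta> * H (pS \<mu>S lam) pB m N \<beta>) \<longlonglongrightarrow>
       measure P {\<omega>\<in>space P. enat m < lcfs_busy_max (\<lambda>j. s j \<omega>) (\<lambda>k. e k \<omega>) (\<lambda>k. b k \<omega>)}"
    unfolding UA using sums_unique[OF sums] by simp
qed


theorem theorem4:
  fixes P :: "'a measure" and P' :: "'b measure" and lam mu :: real
    and s e :: "nat \<Rightarrow> 'a \<Rightarrow> real" and b :: "nat \<Rightarrow> 'a \<Rightarrow> nat"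
    and s' e' :: "nat \<Rightarrow> 'b \<Rightarrow> real" and b' :: "nat \<Rightarrow> 'b \<Rightarrow> nat"
  assumes inp: "lcfs_input P lam s e b"
    and inp': "lcfs_input P' lam s' e' b'"
    and same_batch: "distr P (count_space UNIV) (b 0) = distr P' (count_space UNIV) (b' 0)"
    and mu: "mu = (\<integral>\<omega>. real (b 0 \<omega>) \<partial>P)"
    and stable: "(\<integral>\<omega>. exp (- lam * s 0 \<omega>) \<partial>P) > mu / (mu + 1)"
    and stable': "(\<integral>\<omega>. exp (- lam * s' 0 \<omega>) \<partial>P') > mu / (mu + 1)"
    and cmp: "(\<integral>\<omega>. exp (- lam * s' 0 \<omega>) \<partial>P') \<ge> (\<integral>\<omega>. exp (- lam * s 0 \<omega>) \<partial>P)"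
  shows "\<forall>t::enat.
    measure P' {\<omega> \<in> space P'. t < lcfs_busy_max (\<lambda>j. s' j \<omega>) (\<lambda>k. e' k \<omega>) (\<lambda>k. b' k \<omega>)}
    \<le> measure P {\<omega> \<in> space P. t < lcfs_busy_max (\<lambda>j. s j \<omega>) (\<lambda>k. e k \<omega>) (\<lambda>k. b k \<omega>)}"
proof (intro allI)
  fix t :: enat
  show "measure P' {\<omega> \<in> space P'. t < lcfs_busy_max (\<lambda>j. s' j \<omega>) (\<lambda>k. e' k \<omega>) (\<lambda>k. b' k \<omega>)}
    \<le> measure P {\<omega> \<in> space P. t < lcfs_busy_max (\<lambda>j. s j \<omega>) (\<lambda>k. e k \<omega>) (\<lambda>k. b k \<omega>)}"
  proof (cases t)
    case infinity
    then show ?thesis by simp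
  next
    case (enat m)
    define pB where "pB = (\<lambda>\<beta>. measure P {\<omega>\<in>space P. b 0 \<omega> = \<beta>})"
    define pB' where "pB' = (\<lambda>\<beta>. measure P' {\<omega>\<in>space P'. b' 0 \<omega> = \<beta>})"
    define p where "p = pS (distr P borel (s 0)) lam"
    define p' where "p' = pS (distr P' borel (s' 0)) lam"
    note s1 = side(1,2,4)[OF inp, folded pB_def p_def]
    note s2 = side(1,2,4)[OF inp', folded pB'_def p'_def]
    note l1 = side(3)[OF inp, where m=m, folded pB_def p_def]
    note l2 = side(3)[OF inp', where m=m, folded pB'_def p'_def]
    have pBeq: "pB' = pB"
    proof
      fix \<beta>
      interpret P1: prob_space P using inp by (simp add: lcfs_input_def)
      interpret P2: prob_space P' using inp' by (simp add: lcfs_input_def)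
      have rb[measurable]: "b 0 \<in> measurable P (count_space UNIV)" using inp by (simp add: lcfs_input_def)
      have rb'[measurable]: "b' 0 \<in> measurable P' (count_space UNIV)" using inp' by (simp add: lcfs_input_def)
      have "pB \<beta> = measure (distr P (count_space UNIV) (b 0)) {\<beta>}" unfolding pB_def
        by (subst measure_distr) (auto intro!: arg_cong[where f="measure P"])
      moreover have "pB' \<beta> = measure (distr P' (count_space UNIV) (b' 0)) {\<beta>}" unfolding pB'_def
        by (subst measure_distr) (auto intro!: arg_cong[where f="measure P'"])
      ultimately show "pB' \<beta> = pB \<beta>" using same_batch by simp
    qed
    interpret hpar pB using s1(2) .
    have p01: "0 \<le> p" "p \<le> 1" using good_pS(2,3)[OF s1(1)] by (auto simp: p_def)
    have p'01: "0 \<le> p'" "p' \<le> 1" using good_pS(2,3)[OF s2(1)] by (auto simp: p'_def)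
    have pp: "p \<le> p'" using cmp s1(3) s2(3) by (simp add: p_def p'_def)
    have le: "(\<Sum>\<beta>. pB \<beta> * H p' pB m N \<beta>) \<le> (\<Sum>\<beta>. pB \<beta> * H p pB m N \<beta>)" for N
      by (intro suminf_le summ H_bounds mult_left_mono H_anti pB_nn) (use p01 p'01 pp in auto)
    have pa: "\<And>\<beta>. measure P {\<omega> \<in> space P. b 0 \<omega> = \<beta>} = pB \<beta>" by (simp add: pB_def)
    have pa': "\<And>\<beta>. measure P' {\<omega> \<in> space P'. b' 0 \<omega> = \<beta>} = pB \<beta>" using pBeq by (simp add: pB'_def fun_eq_iff)
    note L1 = l1[unfolded pa] and L2 = l2[unfolded pa' pBeq]
    show ?thesis
      unfolding enat using LIMSEQ_le[OF L2 L1] le by auto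
  qed
qed


end
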